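(* Let $X$ be a locally K-elastic Polish space without isolated points, let $\Gamma$ be the group of self-homeomorphisms $h$ of $X$ for which $\{x\in X:h(x)\neq x\}$ has compact closure (the same conclusion holds for the group of all self-homeomorphisms), acting by application, and let $I$ be the ideal of nowhere dense subsets of $X$. Then Player II has a winning strategy in the DC game for $\Gamma\curvearrowright X, I$.
   Context: A Polish space $X$ is K-elastic if it is locally compact and for every nonempty open set $O\subseteq X$ with compact closure and every compact $K\subseteq X$ there is a self-homeomorphism $h$ of $X$ with $K\subseteq h[O]$ and such that $\{x\in X: h(x)\neq x\}$ has compact closure. $X$ is locally K-elastic if it has a basis of open sets each of which (as a subspace) is K-elastic. The DC game for a group $\Gamma$ acting on $X$ and an invariant ideal $I$: players I and II alternate for $\omega$ rounds; at round $n$ Player I plays $a_n\in I$ and Player II answers with $\gamma_n\in\Gamma$, subject to $\gamma_0=1$ and $\gamma_n$ fixes every element of $\bigcup_{m<n}\gamma_m\cdot a_m$ (where $\gamma\cdot a=\{\gamma\cdot x:x\in a\}$). Player II wins if $\bigcup_{n}\gamma_n\cdot a_n\in I$. *)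

theory Defs
  imports "HOL-Analysis.Analysis"
begin

definition Polish_space :: "'a topology \<Rightarrow> bool" where
  "Polish_space X \<longleftrightarrow> completely_metrizable_space X \<and> separable_space X"

definition moved_set :: "'a topology \<Rightarrow> ('a \<Rightarrow> 'a) \<Rightarrow> 'a set" where
  "moved_set X h = {x \<in> topspace X. h x \<noteq> x}"

definition K_elastic :: "'a topology \<Rightarrow> bool" where
  "K_elastic X \<longleftrightarrow> Polish_space X \<and> locally_compact_space X \<and>
     (\<forall>W K. openin X W \<and> W \<noteq> {} \<and> compactin X (X closure_of W) \<and> compactin X K \<longrightarrow>
        (\<exists>h. homeomorphic_map X X h \<and> K \<subseteq> h ` W \<and>
             compactin X (X closure_of (moved_set X h))))"

definition locally_K_elastic :: "'a topology \<Rightarrow> bool" where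
  "locally_K_elastic X \<longleftrightarrow>
     (\<forall>U x. openin X U \<and> x \<in> U \<longrightarrow>
        (\<exists>V. openin X V \<and> x \<in> V \<and> V \<subseteq> U \<and> K_elastic (subtopology X V)))"

text \<open>The group of compactly supported self-homeomorphisms. Elements are represented
  canonically as maps that are the identity outside the topspace.\<close>
definition compactly_supported_homeos :: "'a topology \<Rightarrow> ('a \<Rightarrow> 'a) set" where
  "compactly_supported_homeos X =
     {h. homeomorphic_map X X h \<and> (\<forall>x. x \<notin> topspace X \<longrightarrow> h x = x) \<and>
         compactin X (X closure_of (moved_set X h))}"

definition nowhere_dense_sets :: "'a topology \<Rightarrow> 'a set set" where
  "nowhere_dense_sets X = {S. S \<subseteq> topspace X \<and> X interior_of (X closure_of S) = {}}"

text \<open>A strategy for Player II maps the list [a_0,...,a_n] of Player I's moves so far to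
  the answer gamma_n.\<close>
definition DC_II_winning_strategy ::
  "('a \<Rightarrow> 'a) set \<Rightarrow> 'a set set \<Rightarrow> ('a set list \<Rightarrow> 'a \<Rightarrow> 'a) \<Rightarrow> bool" where
  "DC_II_winning_strategy G I \<sigma> \<longleftrightarrow>
     (\<forall>a :: nat \<Rightarrow> 'a set. (\<forall>n. a n \<in> I) \<longrightarrow>
        (\<forall>n. \<sigma> (map a [0..<Suc n]) \<in> G) \<and>
        \<sigma> [a 0] = id \<and>
        (\<forall>n m x. m < n \<and> x \<in> \<sigma> (map a [0..<Suc m]) ` a m \<longrightarrow>
            \<sigma> (map a [0..<Suc n]) x = x) \<and>
        (\<Union>n. \<sigma> (map a [0..<Suc n]) ` a n) \<in> I)"

definition DC_II_wins :: "('a \<Rightarrow> 'a) set \<Rightarrow> 'a set set \<Rightarrow> bool" where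
  "DC_II_wins G I \<longleftrightarrow> (\<exists>\<sigma>. DC_II_winning_strategy G I \<sigma>)"

end

theory Submission
  imports Defs
begin
lemma nd_Un:
  assumes a: "A \<in> nowhere_dense_sets X" and b: "B \<in> nowhere_dense_sets X"
  shows "A \<union> B \<in> nowhere_dense_sets X"
proof -
  define W where "W = X interior_of (X closure_of A \<union> X closure_of B)"
  have Wsub: "W \<subseteq> X closure_of A \<union> X closure_of B"
    unfolding W_def by (rule interior_of_subset)
  have "W - X closure_of A \<subseteq> X closure_of B"
    using Wsub by blast
  moreover have "openin X (W - X closure_of A)" unfolding W_def by (simp add: openin_diff)
  ultimately have "W - X closure_of A \<subseteq> X interior_of (X closure_of B)"
    by (simp add: interior_of_maximal)
  also have "\<dots> = {}" using b by (simp add: nowhere_dense_sets_def)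
  finally have "W \<subseteq> X closure_of A" by blast
  moreover have "openin X W" unfolding W_def by simp
  ultimately have "W \<subseteq> X interior_of (X closure_of A)"
    by (simp add: interior_of_maximal)
  also have "\<dots> = {}" using a by (simp add: nowhere_dense_sets_def)
  finally have "W = {}" by blast
  then show ?thesis using a b unfolding nowhere_dense_sets_def W_def by simp
qed

lemma nd_meets:
  assumes "S \<in> nowhere_dense_sets X" "openin X V" "V \<noteq> {}"
  shows "V - X closure_of S \<noteq> {}"
proof
  assume "V - X closure_of S = {}"
  then have "V \<subseteq> X interior_of (X closure_of S)"
    using assms by (simp add: interior_of_maximal)
  then show False using assms by (auto simp: nowhere_dense_sets_def)
qed


lemma nd_homeo:
  assumes "homeomorphic_map X X g" "S \<in> nowhere_dense_sets X"
  shows "g ` S \<in> nowhere_dense_sets X"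
proof -
  have S: "S \<subseteq> topspace X" using assms by (simp add: nowhere_dense_sets_def)
  have "g ` S \<subseteq> topspace X"
    using S homeomorphic_imp_surjective_map[OF assms(1)] by blast
  moreover have "X interior_of (X closure_of (g ` S)) = g ` (X interior_of (X closure_of S))"
    using homeomorphic_map_closure_of[OF assms(1) S] homeomorphic_map_interior_of[OF assms(1)]
    by (simp add: closure_of_subset_topspace)
  ultimately show ?thesis using assms by (simp add: nowhere_dense_sets_def)
qed


lemma small_nbhd:
  assumes H: "Hausdorff_space X" and E: "openin X E"
    and lc: "locally_compact_space (subtopology X E)"
    and Ob: "openin X Ob" "Ob \<subseteq> E" "x \<in> Ob"
  obtains U where "openin X U" "x \<in> U" "compactin X (X closure_of U)" "X closure_of U \<subseteq> Ob"
proof -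
  have HE: "Hausdorff_space (subtopology X E)" using H by (simp add: Hausdorff_space_subtopology)
  have nb: "neighbourhood_base_of (\<lambda>C. compactin (subtopology X E) C \<and> closedin (subtopology X E) C) (subtopology X E)"
    using locally_compact_space_neighbourhood_base_closedin[of "subtopology X E"] HE lc by simp
  have oo: "openin (subtopology X E) Ob" using Ob E by (simp add: openin_open_subtopology)
  have "\<exists>U V. openin (subtopology X E) U \<and> (compactin (subtopology X E) V \<and> closedin (subtopology X E) V) \<and> x \<in> U \<and> U \<subseteq> V \<and> V \<subseteq> Ob"
    using nb oo Ob(3) unfolding neighbourhood_base_of by blast
  then obtain U C where U: "openin (subtopology X E) U" and C: "compactin (subtopology X E) C"
      and xU: "x \<in> U" and UC: "U \<subseteq> C" and CO: "C \<subseteq> Ob"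
    by blast
  have Uo: "openin X U" using U E openin_trans_full by blast
  have Cc: "compactin X C" using C by (simp add: compactin_subtopology)
  have Ccl: "closedin X C" using Cc H compactin_imp_closedin by blast
  have clU: "X closure_of U \<subseteq> C" using UC Ccl closure_of_minimal by blast
  have "compactin X (X closure_of U)" using closed_compactin[OF Cc clU] by simp
  then show ?thesis using that Uo xU clU CO by blast
qed


lemma id_G: "id \<in> compactly_supported_homeos X"
  by (simp add: compactly_supported_homeos_def moved_set_def)


lemma comp_G:
  assumes "g1 \<in> compactly_supported_homeos X" "g2 \<in> compactly_supported_homeos X"
    and H: "Hausdorff_space X"
  shows "g2 \<circ> g1 \<in> compactly_supported_homeos X"
proof -
  have h1: "homeomorphic_map X X g1" and h2: "homeomorphic_map X X g2"
    and o1: "\<forall>x. x \<notin> topspace X \<longrightarrow> g1 x = x" and o2: "\<forall>x. x \<notin> topspace X \<longrightarrow> g2 x = x"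
    and c1: "compactin X (X closure_of moved_set X g1)" and c2: "compactin X (X closure_of moved_set X g2)"
    using assms by (auto simp: compactly_supported_homeos_def)
  have "moved_set X (g2 \<circ> g1) \<subseteq> moved_set X g1 \<union> moved_set X g2"
    by (auto simp: moved_set_def)
  then have "X closure_of moved_set X (g2 \<circ> g1) \<subseteq> X closure_of moved_set X g1 \<union> X closure_of moved_set X g2"
    by (metis closure_of_Un closure_of_mono)
  then have "compactin X (X closure_of moved_set X (g2 \<circ> g1))"
    using closed_compactin[OF compactin_Un[OF c1 c2]] by simp
  moreover have "homeomorphic_map X X (g2 \<circ> g1)" using h1 h2 homeomorphic_map_compose by blast
  ultimately show ?thesis using o1 o2 by (simp add: compactly_supported_homeos_def)
qed




lemma ext_cont:
  assumes E: "openin X E" and K: "closedin X K" "K \<subseteq> E"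
    and phi: "continuous_map (subtopology X E) (subtopology X E) \<phi>"
    and fx: "\<And>x. x \<in> E \<Longrightarrow> x \<notin> K \<Longrightarrow> \<phi> x = x"
  shows "continuous_map X X (\<lambda>x. if x \<in> E then \<phi> x else x)"
proof (rule pasting_lemma[where I="{True, False}" and T="\<lambda>b. if b then E else topspace X - K"
      and f="\<lambda>b. if b then \<phi> else id"])
  fix i assume "i \<in> {True, False}"
  then show "openin X (if i then E else topspace X - K)"
    using E K by auto
next
  fix i assume "i \<in> {True, False}"
  have c1: "continuous_map (subtopology X E) X \<phi>"
    using phi continuous_map_in_subtopology by blast
  have c2: "continuous_map (subtopology X (topspace X - K)) X id"
    by (simp add: continuous_map_from_subtopology)
  show "continuous_map (subtopology X (if i then E else topspace X - K)) X (if i then \<phi> else id)"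
    using c1 c2 by (cases i) auto
next
  fix i j x assume "i \<in> {True, False}" "j \<in> {True, False}"
     "x \<in> topspace X \<inter> (if i then E else topspace X - K) \<inter> (if j then E else topspace X - K)"
  then show "(if i then \<phi> else id) x = (if j then \<phi> else id) x"
    using fx by (cases i; cases j) auto
next
  fix x assume "x \<in> topspace X"
  then show "\<exists>j. j \<in> {True, False} \<and> x \<in> (if j then E else topspace X - K) \<and>
      (if x \<in> E then \<phi> x else x) = (if j then \<phi> else id) x"
    using K by (cases "x \<in> E") auto
qed

lemma ext_homeo:
  assumes H: "Hausdorff_space X" and E: "openin X E"
    and h: "homeomorphic_map (subtopology X E) (subtopology X E) h"
    and c: "compactin (subtopology X E) ((subtopology X E) closure_of (moved_set (subtopology X E) h))"
  shows "(\<lambda>x. if x \<in> E then h x else x) \<in> compactly_supported_homeos X"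
proof -
  have Et: "E \<subseteq> topspace X" using E openin_subset by blast
  have tE: "topspace (subtopology X E) = E" using Et by (rule topspace_subtopology_subset)
  obtain k where hk: "homeomorphic_maps (subtopology X E) (subtopology X E) h k"
    using h homeomorphic_map_maps by blast
  have hc: "continuous_map (subtopology X E) (subtopology X E) h"
    and kc: "continuous_map (subtopology X E) (subtopology X E) k"
    and kh: "\<And>x. x \<in> E \<Longrightarrow> k (h x) = x" and hk': "\<And>x. x \<in> E \<Longrightarrow> h (k x) = x"
    using hk tE by (auto simp: homeomorphic_maps_def)
  have hE: "\<And>x. x \<in> E \<Longrightarrow> h x \<in> E" and kE: "\<And>x. x \<in> E \<Longrightarrow> k x \<in> E"
    using hc kc tE by (auto simp: continuous_map_def)
  define M where "M = {x \<in> E. h x \<noteq> x}"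
  have Mdef: "moved_set (subtopology X E) h = M" using Et by (auto simp: moved_set_def M_def tE)
  define K where "K = (subtopology X E) closure_of M"
  have KE: "K \<subseteq> E" unfolding K_def using closure_of_subset_topspace tE by metis
  have Kc: "compactin X K" using c Mdef K_def by (simp add: compactin_subtopology)
  have Kcl: "closedin X K" using Kc H compactin_imp_closedin by blast
  have MK: "M \<subseteq> K" unfolding K_def using closure_of_subset[of M "subtopology X E"] tE M_def by blast
  have hfix: "\<And>x. x \<in> E \<Longrightarrow> x \<notin> K \<Longrightarrow> h x = x" using MK M_def by blast
  have kfix: "\<And>x. x \<in> E \<Longrightarrow> x \<notin> K \<Longrightarrow> k x = x" using hfix kh by metis
  define g where "g = (\<lambda>x. if x \<in> E then h x else x)"
  define g' where "g' = (\<lambda>x. if x \<in> E then k x else x)"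
  have cg: "continuous_map X X g" unfolding g_def by (rule ext_cont[OF E Kcl KE hc hfix])
  have cg': "continuous_map X X g'" unfolding g'_def by (rule ext_cont[OF E Kcl KE kc kfix])
  have "homeomorphic_maps X X g g'"
    unfolding homeomorphic_maps_def using cg cg' hE kE kh hk' by (auto simp: g_def g'_def)
  then have hom: "homeomorphic_map X X g" using homeomorphic_maps_imp_map by blast
  have "moved_set X g = M" using Et by (auto simp: moved_set_def g_def M_def)
  moreover have "X closure_of M \<subseteq> K" using MK Kcl closure_of_minimal by blast
  ultimately have "compactin X (X closure_of moved_set X g)"
    using closed_compactin[OF Kc] by simp
  moreover have "\<forall>x. x \<notin> topspace X \<longrightarrow> g x = x" using Et by (auto simp: g_def)
  ultimately show ?thesis using hom by (simp add: compactly_supported_homeos_def g_def)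
qed



lemma K_elastic_homeo:
  assumes f: "homeomorphic_map S T f" and KS: "K_elastic S"
  shows "K_elastic T"
proof -
  obtain f' where ff: "homeomorphic_maps S T f f'" using f homeomorphic_map_maps by blast
  have f'h: "homeomorphic_map T S f'" using ff homeomorphic_maps_map by blast
  have sp: "S homeomorphic_space T" using ff homeomorphic_space_def by blast
  have cf: "continuous_map S T f" and cf': "continuous_map T S f'"
    and f'f: "\<And>x. x \<in> topspace S \<Longrightarrow> f' (f x) = x" and ff': "\<And>y. y \<in> topspace T \<Longrightarrow> f (f' y) = y"
    using ff by (auto simp: homeomorphic_maps_def)
  have fS: "\<And>x. x \<in> topspace S \<Longrightarrow> f x \<in> topspace T"
    using cf continuous_map_image_subset_topspace by blast
  have f'T: "\<And>y. y \<in> topspace T \<Longrightarrow> f' y \<in> topspace S"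
    using cf' continuous_map_image_subset_topspace by blast
  have PS: "Polish_space S" and LS: "locally_compact_space S"
    and ES0: "\<forall>W K. openin S W \<and> W \<noteq> {} \<and> compactin S (S closure_of W) \<and> compactin S K \<longrightarrow>
        (\<exists>h. homeomorphic_map S S h \<and> K \<subseteq> h ` W \<and> compactin S (S closure_of (moved_set S h)))"
    using KS unfolding K_elastic_def by auto
  have ES: "\<exists>h. homeomorphic_map S S h \<and> K \<subseteq> h ` W \<and> compactin S (S closure_of (moved_set S h))"
    if "openin S W" "W \<noteq> {}" "compactin S (S closure_of W)" "compactin S K" for W K
    using ES0 that by blast
  have PT: "Polish_space T"
    using PS homeomorphic_completely_metrizable_space[OF sp] homeomorphic_separable_space[OF sp]
    by (simp add: Polish_space_def)
  have LT: "locally_compact_space T" using LS homeomorphic_locally_compact_space[OF sp] by simp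
  have ET: "\<exists>h. homeomorphic_map T T h \<and> K \<subseteq> h ` W \<and> compactin T (T closure_of (moved_set T h))"
    if W: "openin T W" "W \<noteq> {}" "compactin T (T closure_of W)" and K: "compactin T K" for W K
  proof -
    have Wt: "W \<subseteq> topspace T" using W openin_subset by blast
    have Kt: "K \<subseteq> topspace T" using K compactin_subset_topspace by blast
    have o: "openin S (f' ` W)" using homeomorphic_map_openness[OF f'h Wt] W by simp
    have ne: "f' ` W \<noteq> {}" using W by simp
    have "S closure_of (f' ` W) = f' ` (T closure_of W)"
      using homeomorphic_map_closure_of[OF f'h Wt] .
    then have cW: "compactin S (S closure_of (f' ` W))"
      using image_compactin[OF W(3) cf'] by simp
    have cK: "compactin S (f' ` K)" using image_compactin[OF K cf'] .
    obtain h where hh: "homeomorphic_map S S h" and Kh: "f' ` K \<subseteq> h ` f' ` W"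
      and ch: "compactin S (S closure_of (moved_set S h))"
      using ES[OF o ne cW cK] by blast
    have hS: "\<And>x. x \<in> topspace S \<Longrightarrow> h x \<in> topspace S"
      using hh homeomorphic_imp_continuous_map continuous_map_image_subset_topspace by blast
    define h' where "h' = f \<circ> (h \<circ> f')"
    have hom: "homeomorphic_map T T h'"
      unfolding h'_def using homeomorphic_map_compose[OF homeomorphic_map_compose[OF f'h hh] f] .
    have KW: "K \<subseteq> h' ` W"
    proof
      fix y assume y: "y \<in> K"
      then obtain w where w: "w \<in> W" "f' y = h (f' w)" using Kh by blast
      have "y = f (f' y)" using ff' Kt y by auto
      then have "y = h' w" using w by (simp add: h'_def)
      then show "y \<in> h' ` W" using w by blast
    qed
    have mv: "moved_set T h' = f ` moved_set S h"
    proof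
      show "moved_set T h' \<subseteq> f ` moved_set S h"
      proof
        fix y assume "y \<in> moved_set T h'"
        then have y: "y \<in> topspace T" "f (h (f' y)) \<noteq> y" by (auto simp: moved_set_def h'_def)
        have "h (f' y) \<noteq> f' y"
        proof
          assume "h (f' y) = f' y"
          then have "f (h (f' y)) = y" using ff' y(1) by simp
          then show False using y(2) by simp
        qed
        then have "f' y \<in> moved_set S h" using f'T y by (simp add: moved_set_def)
        then show "y \<in> f ` moved_set S h" by (rule image_eqI[rotated]) (simp add: ff' y)
      qed
    next
      show "f ` moved_set S h \<subseteq> moved_set T h'"
      proof
        fix y assume "y \<in> f ` moved_set S h"
        then obtain x where x: "x \<in> topspace S" "h x \<noteq> x" "y = f x" by (auto simp: moved_set_def)
        have "f (h x) \<noteq> f x"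
        proof
          assume "f (h x) = f x"
          then have "f' (f (h x)) = f' (f x)" by simp
          then show False using x f'f hS by simp
        qed
        then show "y \<in> moved_set T h'" using x fS f'f by (simp add: moved_set_def h'_def)
      qed
    qed
    have Mt: "moved_set S h \<subseteq> topspace S" by (auto simp: moved_set_def)
    have "T closure_of (moved_set T h') = f ` (S closure_of moved_set S h)"
      using mv homeomorphic_map_closure_of[OF f Mt] by simp
    then have "compactin T (T closure_of (moved_set T h'))"
      using image_compactin[OF ch cf] by simp
    then show ?thesis using hom KW by blast
  qed
  show ?thesis unfolding K_elastic_def using PT LT ET by blast
qed



lemma sub_closure_eq:
  assumes "B \<subseteq> E" "X closure_of B \<subseteq> E"
  shows "(subtopology X E) closure_of B = X closure_of B"
  using assms by (simp add: closure_of_subtopology Int_absorb1 Int_absorb2)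

lemma step_one:
  assumes H: "Hausdorff_space X" and LK: "locally_K_elastic X"
    and E: "openin X E" and KE: "K_elastic (subtopology X E)"
    and C: "compactin X C" "C \<subseteq> E" and a: "a \<in> nowhere_dense_sets X"
  obtains g E' where "g \<in> compactly_supported_homeos X" "\<forall>x. x \<notin> E \<longrightarrow> g x = x" "\<forall>x\<in>E. g x \<in> E"
     "openin X E'" "K_elastic (subtopology X E')" "C \<subseteq> E'" "E' \<subseteq> E" "g ` a \<inter> E' = {}"
proof (cases "E = {}")
  case True
  show ?thesis
    by (rule that[of id E]) (use id_G E KE C True in auto)
next
  case False
  have Et: "E \<subseteq> topspace X" using E openin_subset by blast
  have tE: "topspace (subtopology X E) = E" using Et by (rule topspace_subtopology_subset)
  have LCE: "locally_compact_space (subtopology X E)"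
    and ES0: "\<forall>W K. openin (subtopology X E) W \<and> W \<noteq> {} \<and> compactin (subtopology X E) ((subtopology X E) closure_of W) \<and> compactin (subtopology X E) K \<longrightarrow>
        (\<exists>h. homeomorphic_map (subtopology X E) (subtopology X E) h \<and> K \<subseteq> h ` W \<and> compactin (subtopology X E) ((subtopology X E) closure_of (moved_set (subtopology X E) h)))"
    using KE unfolding K_elastic_def by auto
  have ES: "\<exists>h. homeomorphic_map (subtopology X E) (subtopology X E) h \<and> K \<subseteq> h ` W \<and> compactin (subtopology X E) ((subtopology X E) closure_of (moved_set (subtopology X E) h))"
    if "openin X W" "W \<subseteq> E" "W \<noteq> {}" "compactin X (X closure_of W)" "X closure_of W \<subseteq> E" "compactin X K" "K \<subseteq> E" for W K
  proof -
    have "openin (subtopology X E) W" using that E by (simp add: openin_open_subtopology)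
    moreover have "compactin (subtopology X E) ((subtopology X E) closure_of W)"
      using that by (simp add: sub_closure_eq compactin_subtopology)
    moreover have "compactin (subtopology X E) K" using that by (simp add: compactin_subtopology)
    ultimately show ?thesis using ES0 that(3) by blast
  qed
  obtain y where y: "y \<in> E" using False by blast
  obtain B' where B': "openin X B'" "y \<in> B'" "compactin X (X closure_of B')" "X closure_of B' \<subseteq> E"
    using small_nbhd[OF H E LCE E subset_refl y] by blast
  obtain B where B: "openin X B" "y \<in> B" "B \<subseteq> B'" "K_elastic (subtopology X B)"
    using LK B'(1,2) unfolding locally_K_elastic_def by blast
  have BtX: "B \<subseteq> topspace X" using B openin_subset by blast
  have clB: "X closure_of B \<subseteq> E" using closure_of_mono[OF B(3)] B'(4) by blast
  have cclB: "compactin X (X closure_of B)"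
    using closed_compactin[OF B'(3) closure_of_mono[OF B(3)]] by simp
  have BE: "B \<subseteq> E" using closure_of_subset[OF BtX] clB by blast
  obtain f where f: "homeomorphic_map (subtopology X E) (subtopology X E) f" and Cf: "C \<subseteq> f ` B"
    using ES[OF B(1) BE _ cclB clB C] B(2) by blast
  have fE: "\<And>x. x \<in> E \<Longrightarrow> f x \<in> E"
    using f homeomorphic_imp_continuous_map continuous_map_image_subset_topspace tE by blast
  define E' where "E' = f ` B"
  have E'E: "E' \<subseteq> E" using fE BE E'_def by blast
  have oE'sub: "openin (subtopology X E) E'"
    using homeomorphic_map_openness[OF f, of B] BE tE B(1) E BtX by (simp add: E'_def openin_open_subtopology)
  have oE': "openin X E'" using openin_trans_full[OF oE'sub E] .
  have "homeomorphic_map (subtopology (subtopology X E) B) (subtopology (subtopology X E) E') f"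
    by (rule homeomorphic_map_subtopologies[OF f]) (use tE BE E'E E'_def in auto)
  then have "homeomorphic_map (subtopology X B) (subtopology X E') f"
    using BE E'E by (simp add: subtopology_subtopology Int_absorb1)
  then have KE': "K_elastic (subtopology X E')" using K_elastic_homeo B(4) by blast
  have "compactin (subtopology X E) (f ` (X closure_of B))"
    using image_compactin[OF _ homeomorphic_imp_continuous_map[OF f]] cclB clB
    by (simp add: compactin_subtopology)
  then have cfB: "compactin X (f ` (X closure_of B))" and fBE: "f ` (X closure_of B) \<subseteq> E"
    by (simp_all add: compactin_subtopology)
  have "E' \<subseteq> f ` (X closure_of B)" using closure_of_subset[OF BtX] E'_def by blast
  then have clE': "X closure_of E' \<subseteq> f ` (X closure_of B)"
    using closure_of_minimal compactin_imp_closedin[OF H cfB] by blast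
  have cclE': "compactin X (X closure_of E')" using closed_compactin[OF cfB clE'] by simp
  have clE'E: "X closure_of E' \<subseteq> E" using clE' fBE by blast
  have Oo: "openin X (E - X closure_of a)" using E by (simp add: openin_diff)
  obtain z where z: "z \<in> E - X closure_of a" using nd_meets[OF a E False] by blast
  obtain W where W: "openin X W" "z \<in> W" "compactin X (X closure_of W)" "X closure_of W \<subseteq> E - X closure_of a"
    using small_nbhd[OF H E LCE Oo _ z] by blast
  have WtX: "W \<subseteq> topspace X" using W openin_subset by blast
  have WO: "W \<subseteq> E - X closure_of a" using closure_of_subset[OF WtX] W(4) by blast
  obtain h where h: "homeomorphic_map (subtopology X E) (subtopology X E) h" and Kh: "X closure_of E' \<subseteq> h ` W"
    and ch: "compactin (subtopology X E) ((subtopology X E) closure_of (moved_set (subtopology X E) h))"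
    using ES[OF W(1) _ _ W(3) _ cclE' clE'E] WO W(2,4) by blast
  define g where "g = (\<lambda>x. if x \<in> E then h x else x)"
  have gG: "g \<in> compactly_supported_homeos X" unfolding g_def by (rule ext_homeo[OF H E h ch])
  have hE: "\<And>x. x \<in> E \<Longrightarrow> h x \<in> E"
    using h homeomorphic_imp_continuous_map continuous_map_image_subset_topspace tE by blast
  have injh: "inj_on h E" using homeomorphic_imp_injective_map[OF h] tE by simp
  have atX: "a \<subseteq> topspace X" using a by (simp add: nowhere_dense_sets_def)
  have disj: "g ` a \<inter> E' = {}"
  proof (rule ccontr)
    assume "g ` a \<inter> E' \<noteq> {}"
    then obtain x where x: "x \<in> a" "g x \<in> E'" by blast
    then have xE: "x \<in> E" using E'E by (auto simp: g_def split: if_splits)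
    then have "h x \<in> X closure_of E'" using x closure_of_subset[of E' X] oE' openin_subset
      by (auto simp: g_def)
    then obtain w where w: "w \<in> W" "h x = h w" using Kh by blast
    then have "x = w" using injh xE WO by (meson DiffD1 inj_onD subsetD)
    then show False using w WO closure_of_subset[OF atX] x by blast
  qed
  show ?thesis
    by (rule that[OF gG _ _ oE' KE' _ E'E disj]) (use hE Cf E'_def in \<open>auto simp: g_def\<close>)
qed



fun Disj :: "'a set list \<Rightarrow> bool" where
  "Disj [] = True"
| "Disj (E # Es) = (E \<inter> \<Union>(set Es) = {} \<and> Disj Es)"

definition okpair :: "'a topology \<Rightarrow> 'a set \<times> 'a set \<Rightarrow> bool" where
  "okpair X p \<longleftrightarrow> openin X (fst p) \<and> K_elastic (subtopology X (fst p)) \<and> compactin X (snd p) \<and> snd p \<subseteq> fst p"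

definition Inv :: "'a topology \<Rightarrow> 'a set \<Rightarrow> ('a set \<times> 'a set) list \<Rightarrow> bool" where
  "Inv X F Es \<longleftrightarrow> F \<in> nowhere_dense_sets X \<and> (\<forall>p\<in>set Es. okpair X p \<and> fst p \<inter> F = {}) \<and> Disj (map fst Es)"

definition CS :: "('a set \<times> 'a set) list \<Rightarrow> 'a set" where
  "CS Es = \<Union>(snd ` set Es)"

lemma list_all2_Union:
  "list_all2 (\<lambda>A B. B \<subseteq> A) As Bs \<Longrightarrow> \<Union>(set Bs) \<subseteq> \<Union>(set As)"
  by (induction rule: list_all2_induct) auto

lemma Disj_mono:
  "list_all2 (\<lambda>A B. B \<subseteq> A) As Bs \<Longrightarrow> Disj As \<Longrightarrow> Disj Bs"
proof (induction rule: list_all2_induct)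
  case Nil then show ?case by simp
next
  case (Cons A As B Bs)
  have "\<Union>(set Bs) \<subseteq> \<Union>(set As)" using list_all2_Union[OF Cons.hyps(2)] .
  then show ?case using Cons by auto
qed

lemma proc:
  assumes H: "Hausdorff_space X" and LK: "locally_K_elastic X"
  shows "(\<forall>p\<in>set Es. okpair X p) \<Longrightarrow> Disj (map fst Es) \<Longrightarrow> a \<in> nowhere_dense_sets X \<Longrightarrow>
    \<exists>g Es'. g \<in> compactly_supported_homeos X \<and> (\<forall>x. x \<notin> \<Union>(fst ` set Es) \<longrightarrow> g x = x)
      \<and> (\<forall>x\<in>\<Union>(fst ` set Es). g x \<in> \<Union>(fst ` set Es)) \<and> map snd Es' = map snd Es
      \<and> list_all2 (\<lambda>p q. fst q \<subseteq> fst p) Es Es' \<and> (\<forall>q\<in>set Es'. okpair X q \<and> fst q \<inter> g ` a = {})"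
proof (induction Es arbitrary: a)
  case Nil
  show ?case using id_G[of X] by (intro exI[of _ id] exI[of _ "[]"]) (simp add: id_def)
next
  case (Cons p Es)
  obtain E C where p: "p = (E, C)" by (cases p)
  have ok: "openin X E" "K_elastic (subtopology X E)" "compactin X C" "C \<subseteq> E"
    using Cons.prems(1) p by (auto simp: okpair_def)
  obtain g1 E' where g1: "g1 \<in> compactly_supported_homeos X" "\<forall>x. x \<notin> E \<longrightarrow> g1 x = x" "\<forall>x\<in>E. g1 x \<in> E"
     "openin X E'" "K_elastic (subtopology X E')" "C \<subseteq> E'" "E' \<subseteq> E" "g1 ` a \<inter> E' = {}"
    using step_one[OF H LK ok Cons.prems(3)] by blast
  have hg1: "homeomorphic_map X X g1" using g1(1) by (simp add: compactly_supported_homeos_def)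
  have a1: "g1 ` a \<in> nowhere_dense_sets X" using nd_homeo[OF hg1 Cons.prems(3)] .
  have dj: "E \<inter> \<Union>(fst ` set Es) = {}" and DEs: "Disj (map fst Es)"
    using Cons.prems(2) p by auto
  obtain g2 Es2 where g2: "g2 \<in> compactly_supported_homeos X" "\<forall>x. x \<notin> \<Union>(fst ` set Es) \<longrightarrow> g2 x = x"
      "\<forall>x\<in>\<Union>(fst ` set Es). g2 x \<in> \<Union>(fst ` set Es)" "map snd Es2 = map snd Es"
      "list_all2 (\<lambda>p q. fst q \<subseteq> fst p) Es Es2" "\<forall>q\<in>set Es2. okpair X q \<and> fst q \<inter> g2 ` (g1 ` a) = {}"
    using Cons.IH[OF _ DEs a1] Cons.prems(1) by auto
  define D where "D = \<Union>(fst ` set Es)"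
  have gG: "g2 \<circ> g1 \<in> compactly_supported_homeos X" using comp_G[OF g1(1) g2(1) H] .
  have out: "\<forall>x. x \<notin> \<Union>(fst ` set (p # Es)) \<longrightarrow> (g2 \<circ> g1) x = x"
    using g1(2) g2(2) p by auto
  have inn: "\<forall>x\<in>\<Union>(fst ` set (p # Es)). (g2 \<circ> g1) x \<in> \<Union>(fst ` set (p # Es))"
  proof
    fix x assume "x \<in> \<Union>(fst ` set (p # Es))"
    then have "x \<in> E \<or> x \<in> D" using p D_def by auto
    then show "(g2 \<circ> g1) x \<in> \<Union>(fst ` set (p # Es))"
    proof
      assume xE: "x \<in> E"
      then have "g1 x \<in> E" using g1(3) by blast
      then have "g1 x \<notin> D" using dj D_def by blast
      then have "g2 (g1 x) = g1 x" using g2(2) D_def by blast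
      then show ?thesis using \<open>g1 x \<in> E\<close> p by auto
    next
      assume xD: "x \<in> D"
      then have "x \<notin> E" using dj D_def by blast
      then have "g1 x = x" using g1(2) by blast
      then show ?thesis using xD g2(3) D_def p by auto
    qed
  qed
  have E'dis: "E' \<inter> (g2 \<circ> g1) ` a = {}"
  proof (rule ccontr)
    assume "E' \<inter> (g2 \<circ> g1) ` a \<noteq> {}"
    then obtain x where x: "x \<in> a" "g2 (g1 x) \<in> E'" by auto
    have n: "g1 x \<notin> E'" using g1(8) x(1) by blast
    show False
    proof (cases "g1 x \<in> D")
      case True
      then have "g2 (g1 x) \<in> D" using g2(3) D_def by blast
      then show False using x(2) g1(7) dj D_def by blast
    next
      case False
      then have "g2 (g1 x) = g1 x" using g2(2) D_def by blast
      then show False using x(2) n by simp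
    qed
  qed
  have okq: "\<forall>q\<in>set ((E', C) # Es2). okpair X q \<and> fst q \<inter> (g2 \<circ> g1) ` a = {}"
    using g1(4-6) ok(3) E'dis g2(6) by (auto simp: okpair_def image_comp)
  show ?case
    apply (rule exI[of _ "g2 \<circ> g1"], rule exI[of _ "(E', C) # Es2"])
    using gG out inn okq g2(4,5) g1(7) p by (auto simp: comp_def)
qed



lemma add_hole:
  assumes H: "Hausdorff_space X" and LK: "locally_K_elastic X"
    and I: "Inv X F Es" and U: "openin X U"
  shows "\<exists>Es1. Inv X F Es1 \<and> CS Es \<subseteq> CS Es1 \<and>
     (U \<noteq> {} \<longrightarrow> (\<exists>Hh. openin X Hh \<and> Hh \<noteq> {} \<and> Hh \<subseteq> U \<and> Hh \<subseteq> CS Es1))"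
proof (cases "U = {}")
  case True
  then show ?thesis using I by blast
next
  case False
  have Fnd: "F \<in> nowhere_dense_sets X" and okE: "\<forall>p\<in>set Es. okpair X p \<and> fst p \<inter> F = {}"
    and DE: "Disj (map fst Es)"
    using I by (auto simp: Inv_def)
  have FtX: "F \<subseteq> topspace X" using Fnd by (simp add: nowhere_dense_sets_def)
  define V where "V = U - X closure_of F"
  have Vo: "openin X V" unfolding V_def using U by (simp add: openin_diff)
  have Vne: "V \<noteq> {}" unfolding V_def using nd_meets[OF Fnd U False] .
  have VF: "V \<inter> F = {}" unfolding V_def using closure_of_subset[OF FtX] by blast
  show ?thesis
  proof (cases "\<exists>i<length Es. V \<inter> fst (Es ! i) \<noteq> {}")
    case True
    then obtain i x where i: "i < length Es" and x: "x \<in> V \<inter> fst (Es ! i)" by blast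
    define E where "E = fst (Es ! i)"
    define C where "C = snd (Es ! i)"
    have pi: "Es ! i \<in> set Es" using i by simp
    have okp: "openin X E" "K_elastic (subtopology X E)" "compactin X C" "C \<subseteq> E" "E \<inter> F = {}"
      using okE pi by (auto simp: okpair_def E_def C_def)
    have LCE: "locally_compact_space (subtopology X E)" using okp(2) by (simp add: K_elastic_def)
    obtain Hh where Hh: "openin X Hh" "x \<in> Hh" "compactin X (X closure_of Hh)" "X closure_of Hh \<subseteq> V \<inter> E"
      using small_nbhd[OF H okp(1) LCE openin_Int[OF Vo okp(1)] _ ] x E_def by blast
    have HhtX: "Hh \<subseteq> topspace X" using Hh openin_subset by blast
    define Es1 where "Es1 = Es[i := (E, C \<union> X closure_of Hh)]"
    have len: "length Es1 = length Es" by (simp add: Es1_def)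
    have nth1: "\<And>j. j < length Es \<Longrightarrow> Es1 ! j = (if j = i then (E, C \<union> X closure_of Hh) else Es ! j)"
      by (simp add: Es1_def i)
    have mapfst: "map fst Es1 = map fst Es"
      by (rule nth_equalityI) (auto simp: len nth1 E_def)
    have ok1: "\<forall>p\<in>set Es1. okpair X p \<and> fst p \<inter> F = {}"
    proof
      fix p assume "p \<in> set Es1"
      then obtain j where j: "j < length Es" "p = Es1 ! j" by (auto simp: in_set_conv_nth len)
      show "okpair X p \<and> fst p \<inter> F = {}"
      proof (cases "j = i")
        case True
        then have "p = (E, C \<union> X closure_of Hh)" using j nth1 by simp
        then show ?thesis using okp Hh(3,4) by (auto simp: okpair_def intro: compactin_Un)
      next
        case False
        then show ?thesis using j nth1 okE by simp
      qed
    qed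
    have Inv1: "Inv X F Es1" using Fnd ok1 DE mapfst by (simp add: Inv_def)
    have CS1: "CS Es \<subseteq> CS Es1"
    proof
      fix z assume "z \<in> CS Es"
      then obtain j where j: "j < length Es" "z \<in> snd (Es ! j)" by (auto simp: CS_def in_set_conv_nth)
      have "z \<in> snd (Es1 ! j)" using j nth1 C_def by (cases "j = i") auto
      then show "z \<in> CS Es1" using j len by (force simp: CS_def in_set_conv_nth)
    qed
    have "Hh \<subseteq> snd (Es1 ! i)" using nth1[OF i] closure_of_subset[OF HhtX] by auto
    then have HCS: "Hh \<subseteq> CS Es1" using i len by (force simp: CS_def in_set_conv_nth)
    have "Hh \<subseteq> U" using closure_of_subset[OF HhtX] Hh(4) V_def by blast
    then show ?thesis using Inv1 CS1 HCS Hh(1,2) by blast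
  next
    case False
    have Vdis: "\<forall>p\<in>set Es. V \<inter> fst p = {}"
    proof
      fix p assume "p \<in> set Es"
      then obtain i where "i < length Es" "p = Es ! i" by (auto simp: in_set_conv_nth)
      then show "V \<inter> fst p = {}" using False by blast
    qed
    obtain x where x: "x \<in> V" using Vne by blast
    obtain E0 where E0: "openin X E0" "x \<in> E0" "E0 \<subseteq> V" "K_elastic (subtopology X E0)"
      using LK Vo x unfolding locally_K_elastic_def by blast
    have LCE: "locally_compact_space (subtopology X E0)" using E0(4) by (simp add: K_elastic_def)
    obtain Hh where Hh: "openin X Hh" "x \<in> Hh" "compactin X (X closure_of Hh)" "X closure_of Hh \<subseteq> E0"
      using small_nbhd[OF H E0(1) LCE E0(1) subset_refl E0(2)] by blast
    have HhtX: "Hh \<subseteq> topspace X" using Hh openin_subset by blast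
    define Es1 where "Es1 = (E0, X closure_of Hh) # Es"
    have "okpair X (E0, X closure_of Hh)" using E0 Hh by (simp add: okpair_def)
    moreover have "E0 \<inter> F = {}" using E0(3) VF by blast
    moreover have "E0 \<inter> \<Union>(set (map fst Es)) = {}" using E0(3) Vdis by auto
    ultimately have Inv1: "Inv X F Es1" using Fnd okE DE by (simp add: Inv_def Es1_def)
    have CS1: "CS Es \<subseteq> CS Es1" by (auto simp: CS_def Es1_def)
    have HCS: "Hh \<subseteq> CS Es1" using closure_of_subset[OF HhtX] by (auto simp: CS_def Es1_def)
    have "Hh \<subseteq> U" using closure_of_subset[OF HhtX] Hh(4) E0(3) V_def by blast
    then show ?thesis using Inv1 CS1 HCS Hh(1,2) by blast
  qed
qed

definition Pstep where
  "Pstep X U F Es a g Es' \<longleftrightarrow> g \<in> compactly_supported_homeos X \<and> (\<forall>x\<in>F. g x = x) \<and>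
     Inv X (F \<union> g ` a) Es' \<and> CS Es \<subseteq> CS Es' \<and>
     (U \<noteq> {} \<longrightarrow> (\<exists>Hh. openin X Hh \<and> Hh \<noteq> {} \<and> Hh \<subseteq> U \<and> Hh \<subseteq> CS Es'))"

lemma Pstep_exists:
  assumes H: "Hausdorff_space X" and LK: "locally_K_elastic X"
    and I: "Inv X F Es" and U: "openin X U" and a: "a \<in> nowhere_dense_sets X"
  shows "\<exists>g Es'. Pstep X U F Es a g Es'"
proof -
  obtain Es1 where Es1: "Inv X F Es1" "CS Es \<subseteq> CS Es1"
      "U \<noteq> {} \<longrightarrow> (\<exists>Hh. openin X Hh \<and> Hh \<noteq> {} \<and> Hh \<subseteq> U \<and> Hh \<subseteq> CS Es1)"
    using add_hole[OF H LK I U] by blast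
  have Fnd: "F \<in> nowhere_dense_sets X" and okE: "\<forall>p\<in>set Es1. okpair X p \<and> fst p \<inter> F = {}"
    and DE: "Disj (map fst Es1)"
    using Es1(1) by (auto simp: Inv_def)
  have okE1: "\<forall>p\<in>set Es1. okpair X p" using okE by blast
  obtain g Es' where g: "g \<in> compactly_supported_homeos X" "\<forall>x. x \<notin> \<Union>(fst ` set Es1) \<longrightarrow> g x = x"
      "\<forall>x\<in>\<Union>(fst ` set Es1). g x \<in> \<Union>(fst ` set Es1)"
      "map snd Es' = map snd Es1" "list_all2 (\<lambda>p q. fst q \<subseteq> fst p) Es1 Es'"
      "\<forall>q\<in>set Es'. okpair X q \<and> fst q \<inter> g ` a = {}"
    using proc[OF H LK okE1 DE a] by blast
  have fixF: "\<forall>x\<in>F. g x = x" using g(2) okE by blast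
  have hg: "homeomorphic_map X X g" using g(1) by (simp add: compactly_supported_homeos_def)
  have nd: "F \<union> g ` a \<in> nowhere_dense_sets X" using nd_Un[OF Fnd nd_homeo[OF hg a]] .
  have la: "list_all2 (\<lambda>A B. B \<subseteq> A) (map fst Es1) (map fst Es')"
    using g(5) by (simp add: list_all2_map1 list_all2_map2)
  have DE': "Disj (map fst Es')" using Disj_mono[OF la DE] .
  have sub: "\<forall>q\<in>set Es'. \<exists>p\<in>set Es1. fst q \<subseteq> fst p"
  proof
    fix q assume "q \<in> set Es'"
    then obtain j where j: "j < length Es'" "q = Es' ! j" by (auto simp: in_set_conv_nth)
    have "length Es1 = length Es'" using g(5) list_all2_lengthD by blast
    then have j1: "j < length Es1" using j by simp
    have "fst q \<subseteq> fst (Es1 ! j)" using list_all2_nthD2[OF g(5) j(1)] j(2) by simp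
    then show "\<exists>p\<in>set Es1. fst q \<subseteq> fst p" using nth_mem[OF j1] by blast
  qed
  have ok': "\<forall>q\<in>set Es'. okpair X q \<and> fst q \<inter> (F \<union> g ` a) = {}"
  proof
    fix q assume q: "q \<in> set Es'"
    then obtain p where p: "p \<in> set Es1" "fst q \<subseteq> fst p" using sub by blast
    have "fst p \<inter> F = {}" using okE p(1) by blast
    then show "okpair X q \<and> fst q \<inter> (F \<union> g ` a) = {}" using g(6) q p(2) by blast
  qed
  have Inv': "Inv X (F \<union> g ` a) Es'" using nd ok' DE' by (simp add: Inv_def)
  have CSeq: "CS Es' = CS Es1"
  proof -
    have "set (map snd Es') = set (map snd Es1)" using g(4) by simp
    then show ?thesis by (simp add: CS_def)
  qed
  have "Pstep X U F Es a g Es'" unfolding Pstep_def using g(1) fixF Inv' CSeq Es1(2,3) by simp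
  then show ?thesis by blast
qed


lemma pi_base:
  assumes P: "Polish_space X"
  obtains U :: "nat \<Rightarrow> 'a set" where "\<And>k. openin X (U k)"
    "\<And>V. openin X V \<Longrightarrow> V \<noteq> {} \<Longrightarrow> \<exists>k. U k \<noteq> {} \<and> U k \<subseteq> V"
proof -
  obtain M d where Md: "Metric_space M d" and X: "X = Metric_space.mtopology M d"
    using P unfolding Polish_space_def completely_metrizable_space_def by blast
  obtain C where C: "countable C" "C \<subseteq> topspace X" "X closure_of C = topspace X"
    using P unfolding Polish_space_def separable_space_def by blast
  interpret Metric_space M d by (rule Md)
  define U where "U k = (if C = {} then {} else
      mball (from_nat_into C (fst (prod_decode k))) (inverse (real (snd (prod_decode k)))))" for k
  have "openin X (U k)" for k unfolding U_def X by auto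
  moreover have "\<exists>k. U k \<noteq> {} \<and> U k \<subseteq> V" if V: "openin X V" "V \<noteq> {}" for V
  proof -
    obtain x where x: "x \<in> V" using V by blast
    have VM: "V \<subseteq> M" using V(1) X openin_subset by fastforce
    obtain r where r: "r > 0" "mball x r \<subseteq> V" using V(1) x unfolding X openin_mtopology by blast
    obtain n where n: "n > 0" "inverse (real n) < r / 2"
      using ex_inverse_of_nat_less[of "r / 2"] r(1) by auto
    have xc: "x \<in> X closure_of C" using C(3) x VM X by auto
    have xM: "x \<in> M" using x VM by blast
    then have "x \<in> mball x (inverse (real n))" using n(1) by simp
    then obtain y where y: "y \<in> C" "y \<in> mball x (inverse (real n))"
      using xc unfolding in_closure_of X by blast
    have Cne: "C \<noteq> {}" using y by blast
    obtain i where i: "from_nat_into C i = y" using from_nat_into_surj[OF C(1) y(1)] by blast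
    define k where "k = prod_encode (i, n)"
    have Uk: "U k = mball y (inverse (real n))" using Cne i by (simp add: U_def k_def)
    have yM: "y \<in> M" and dxy: "d x y < inverse (real n)" using y by auto
    have "mball y (inverse (real n)) \<subseteq> mball x r"
    proof
      fix z assume "z \<in> mball y (inverse (real n))"
      then have z: "z \<in> M" "d y z < inverse (real n)" by auto
      have "d x z \<le> d x y + d y z" using triangle x VM yM z(1) by blast
      then have "d x z < r" using dxy z(2) n(2) by linarith
      then show "z \<in> mball x r" using xM z(1) by simp
    qed
    moreover have "y \<in> U k" using Uk yM n(1) by simp
    ultimately show ?thesis using Uk r(2) by blast
  qed
  ultimately show ?thesis using that by blast
qed



definition trans :: "'a topology \<Rightarrow> 'a set \<Rightarrow> 'a set \<Rightarrow> ('a set \<times> 'a set) list \<Rightarrow> 'a set \<Rightarrow>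
    ('a \<Rightarrow> 'a) \<times> ('a set \<times> 'a set) list" where
  "trans X U F Es a = (SOME p. Pstep X U F Es a (fst p) (snd p))"

primrec Srun :: "'a topology \<Rightarrow> (nat \<Rightarrow> 'a set) \<Rightarrow> (nat \<Rightarrow> 'a set) \<Rightarrow> nat \<Rightarrow>
    'a set \<times> ('a set \<times> 'a set) list \<times> ('a \<Rightarrow> 'a)" where
  "Srun X U a 0 = (a 0, [], id)"
| "Srun X U a (Suc n) = (let s = Srun X U a n;
      p = trans X (U n) (fst s) (fst (snd s)) (a (Suc n))
    in (fst s \<union> fst p ` a (Suc n), snd p, fst p))"

lemma Srun_cong: "(\<And>i. i \<le> n \<Longrightarrow> a i = b i) \<Longrightarrow> Srun X U a n = Srun X U b n"
  by (induction n) (auto simp: Let_def)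

theorem mainTheorem8:
  fixes X :: "'a topology"
  assumes "Polish_space X"
    and "locally_K_elastic X"
    and "\<forall>x \<in> topspace X. \<not> openin X {x}"
  shows "DC_II_wins (compactly_supported_homeos X) (nowhere_dense_sets X)"
proof -
  have H: "Hausdorff_space X"
    using assms(1) completely_metrizable_imp_metrizable_space metrizable_imp_Hausdorff_space
    by (auto simp: Polish_space_def)
  note LK = assms(2)
  obtain U :: "nat \<Rightarrow> 'a set" where Uo: "\<And>k. openin X (U k)"
    and Ub: "\<And>V. openin X V \<Longrightarrow> V \<noteq> {} \<Longrightarrow> \<exists>k. U k \<noteq> {} \<and> U k \<subseteq> V"
    using pi_base[OF assms(1)] by blast
  define \<sigma> where "\<sigma> l = snd (snd (Srun X U (\<lambda>i. l ! i) (length l - 1)))" for l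
  have "DC_II_winning_strategy (compactly_supported_homeos X) (nowhere_dense_sets X) \<sigma>"
    unfolding DC_II_winning_strategy_def
  proof (intro allI impI)
    fix a :: "nat \<Rightarrow> 'a set"
    assume a: "\<forall>n. a n \<in> nowhere_dense_sets X"
    define \<gamma> where "\<gamma> n = snd (snd (Srun X U a n))" for n
    define Fn where "Fn n = fst (Srun X U a n)" for n
    define Es where "Es n = fst (snd (Srun X U a n))" for n
    have \<sigma>eq: "\<sigma> (map a [0..<Suc n]) = \<gamma> n" for n
    proof -
      have "Srun X U (\<lambda>i. map a [0..<Suc n] ! i) n = Srun X U a n"
        by (rule Srun_cong) (simp add: nth_map_upt less_Suc_eq_le del: upt_Suc)
      then show ?thesis by (simp add: \<sigma>_def \<gamma>_def del: upt_Suc)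
    qed
    have SrunS: "Srun X U a (Suc n) = (Fn n \<union> fst (trans X (U n) (Fn n) (Es n) (a (Suc n))) ` a (Suc n),
        snd (trans X (U n) (Fn n) (Es n) (a (Suc n))), fst (trans X (U n) (Fn n) (Es n) (a (Suc n))))" for n
      by (simp add: Let_def Fn_def Es_def)
    have stepP: "Pstep X (U n) (Fn n) (Es n) (a (Suc n)) (\<gamma> (Suc n)) (Es (Suc n))"
      if "Inv X (Fn n) (Es n)" for n
    proof -
      have "\<exists>p. Pstep X (U n) (Fn n) (Es n) (a (Suc n)) (fst p) (snd p)"
        using Pstep_exists[OF H LK that Uo a[rule_format]] by auto
      then have "Pstep X (U n) (Fn n) (Es n) (a (Suc n)) (fst (trans X (U n) (Fn n) (Es n) (a (Suc n))))
           (snd (trans X (U n) (Fn n) (Es n) (a (Suc n))))"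
        unfolding trans_def by (rule someI_ex)
      then show ?thesis unfolding \<gamma>_def Es_def[of "Suc n"] SrunS by simp
    qed
    have FnS: "Fn (Suc n) = Fn n \<union> \<gamma> (Suc n) ` a (Suc n)" for n
      unfolding \<gamma>_def Fn_def[of "Suc n"] SrunS by simp
    have F0: "Fn 0 = a 0" and E0: "Es 0 = []" and g0: "\<gamma> 0 = id"
      by (simp_all add: Fn_def Es_def \<gamma>_def)
    have inv: "Inv X (Fn n) (Es n)" for n
    proof (induction n)
      case 0
      then show ?case using a F0 E0 by (simp add: Inv_def)
    next
      case (Suc n)
      then show ?case using stepP[OF Suc] FnS by (simp add: Pstep_def)
    qed
    have P: "Pstep X (U n) (Fn n) (Es n) (a (Suc n)) (\<gamma> (Suc n)) (Es (Suc n))" for n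
      using stepP[OF inv] .
    have gG: "\<gamma> n \<in> compactly_supported_homeos X" for n
      using P[of "n - 1"] g0 id_G[of X] by (cases n) (auto simp: Pstep_def)
    have imgF: "\<gamma> m ` a m \<subseteq> Fn m" for m
      using F0 g0 FnS by (cases m) auto
    have Fmono: "m \<le> n \<Longrightarrow> Fn m \<subseteq> Fn n" for m n
      by (induction n rule: dec_induct) (auto simp: FnS)
    have CSmono: "CS (Es m) \<subseteq> CS (Es n)" if "m \<le> n" for m n
      using that
    proof (induction n rule: dec_induct)
      case base then show ?case by simp
    next
      case (step k)
      have "CS (Es k) \<subseteq> CS (Es (Suc k))" using P[of k] unfolding Pstep_def by blast
      then show ?case using step by blast
    qed
    have CSdis: "CS (Es n) \<inter> Fn n = {}" for n
      using inv[of n] by (auto simp: Inv_def CS_def okpair_def)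
    have FtX: "Fn n \<subseteq> topspace X" for n
      using inv[of n] by (simp add: Inv_def nowhere_dense_sets_def)
    have fixs: "\<gamma> n x = x" if "m < n" "x \<in> \<gamma> m ` a m" for m n x
    proof -
      define n' where "n' = n - 1"
      have n': "n = Suc n'" using that(1) n'_def by simp
      have "x \<in> Fn n'" using imgF[of m] Fmono[of m n'] that n' by auto
      then show ?thesis using P[of n'] n' by (simp add: Pstep_def)
    qed
    define UU where "UU = (\<Union>n. \<gamma> n ` a n)"
    have UUtX: "UU \<subseteq> topspace X" unfolding UU_def using imgF FtX by blast
    have "X interior_of (X closure_of UU) = {}"
    proof (rule ccontr)
      assume ne: "X interior_of (X closure_of UU) \<noteq> {}"
      obtain k where k: "U k \<noteq> {}" "U k \<subseteq> X interior_of (X closure_of UU)"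
        using Ub[OF _ ne] by auto
      obtain Hh where Hh: "openin X Hh" "Hh \<noteq> {}" "Hh \<subseteq> U k" "Hh \<subseteq> CS (Es (Suc k))"
        using P[of k] k(1) by (auto simp: Pstep_def)
      have "Hh \<inter> \<gamma> m ` a m = {}" for m
      proof -
        define N where "N = max (Suc k) m"
        have "Hh \<subseteq> CS (Es N)" using Hh(4) CSmono[of "Suc k" N] N_def by auto
        moreover have "\<gamma> m ` a m \<subseteq> Fn N" using imgF[of m] Fmono[of m N] N_def by auto
        ultimately show ?thesis using CSdis[of N] by blast
      qed
      then have "Hh \<inter> UU = {}" unfolding UU_def by blast
      then have "Hh \<inter> X closure_of UU = {}" by (simp add: openin_Int_closure_of_eq_empty[OF Hh(1)])
      moreover have "Hh \<subseteq> X closure_of UU" using Hh(3) k(2) interior_of_subset[of X "X closure_of UU"] by blast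
      ultimately show False using Hh(2) by blast
    qed
    then have UUI: "UU \<in> nowhere_dense_sets X" using UUtX by (simp add: nowhere_dense_sets_def)
    show "(\<forall>n. \<sigma> (map a [0..<Suc n]) \<in> compactly_supported_homeos X) \<and>
        \<sigma> [a 0] = id \<and>
        (\<forall>n m x. m < n \<and> x \<in> \<sigma> (map a [0..<Suc m]) ` a m \<longrightarrow> \<sigma> (map a [0..<Suc n]) x = x) \<and>
        (\<Union>n. \<sigma> (map a [0..<Suc n]) ` a n) \<in> nowhere_dense_sets X"
    proof -
      have "\<sigma> [a 0] = \<gamma> 0" using \<sigma>eq[of 0] by simp
      then have c2: "\<sigma> [a 0] = id" using g0 by simp
      have c1: "\<forall>n. \<sigma> (map a [0..<Suc n]) \<in> compactly_supported_homeos X"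
        unfolding \<sigma>eq using gG by blast
      have c3: "\<forall>n m x. m < n \<and> x \<in> \<sigma> (map a [0..<Suc m]) ` a m \<longrightarrow> \<sigma> (map a [0..<Suc n]) x = x"
        unfolding \<sigma>eq
      proof (intro allI impI)
        fix n m x assume "m < n \<and> x \<in> \<gamma> m ` a m"
        then show "\<gamma> n x = x" using fixs by blast
      qed
      have c4: "(\<Union>n. \<sigma> (map a [0..<Suc n]) ` a n) = UU"
        unfolding \<sigma>eq UU_def by (rule refl)
      show ?thesis unfolding c4 using c1 c2 c3 UUI by (intro conjI)
    qed
  qed
  then show ?thesis unfolding DC_II_wins_def by blast
qed


end
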